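(* Let $\Gamma=\mathsf{PSL}_2(\mathbb{Z})=\langle U,S\mid U^3,S^2\rangle$, with $U$ of order $3$ and $S$ of order $2$. For $n,m\ge0$ let $q(n,m)$ be the number of words in $\{U,S\}$ with exactly $n$ letters $U$ and $m$ letters $S$ that equal the identity in $\Gamma$, and let $\hat q(n,m)$ be the number of such words which in addition do not contain two consecutive letters $S$ (i.e. do not contain the factor $SS$). Set $\hat q(n,m)=0$ if an argument is negative. Then for all $n,m\ge 0$, $$q(3n,2m)=\sum_{k\ge0}\hat q(3n,2m-2k)\binom{3n+k}{k}.$$ Consequently, with $Q(x,y)=\sum_{n,m\ge0}q(n,m)x^ny^m$ and $\widehat Q(x,y)=\sum_{n,m\ge0}\hat q(3n,2m)x^{3n}y^{2m}$, $$Q(x,y)=\widehat{Q}\Big(\frac{x}{1-y^2},y\Big)\cdot\frac{1}{1-y^2}.$$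
   Context: Words are finite sequences over the alphabet $\{U,S\}$ read as products in $\Gamma$; the empty word counts as a word equal to the identity. Note $q(n,m)=\hat q(n,m)=0$ unless $3\mid n$ and $2\mid m$. *)

theory Defs
  imports Complex_Main "HOL-Library.Sublist" "HOL-Computational_Algebra.Formal_Power_Series"
begin

text \<open>The modular group Gamma = PSL_2(Z), realised concretely: 2x2 integer matrices
  (a,b,c,d) = [[a,b],[c,d]] of determinant 1, taken modulo +-I.
  Generators: S = [[0,-1],[1,0]] (order 2 in PSL_2(Z)) and U = S T = [[0,-1],[1,1]]
  (order 3 in PSL_2(Z)); these give the presentation <U,S | U^3, S^2>.\<close>

type_synonym mat2 = "int \<times> int \<times> int \<times> int"

fun mat2_mult :: "mat2 \<Rightarrow> mat2 \<Rightarrow> mat2" where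
  "mat2_mult (a,b,c,d) (e,f,g,h) = (a*e + b*g, a*f + b*h, c*e + d*g, c*f + d*h)"

definition mat2_id :: mat2 where "mat2_id = (1,0,0,1)"

datatype letter = U | S

fun letter_mat :: "letter \<Rightarrow> mat2" where
  "letter_mat U = (0,-1,1,1)"
| "letter_mat S = (0,-1,1,0)"

definition word_mat :: "letter list \<Rightarrow> mat2" where
  "word_mat w = foldr (\<lambda>x M. mat2_mult (letter_mat x) M) w mat2_id"

definition is_identity :: "letter list \<Rightarrow> bool" where
  "is_identity w \<longleftrightarrow> word_mat w = (1,0,0,1) \<or> word_mat w = (-1,0,0,-1)"

definition q :: "nat \<Rightarrow> nat \<Rightarrow> nat" where
  "q n m = card {w :: letter list. length (filter (\<lambda>x. x = U) w) = n
                   \<and> length (filter (\<lambda>x. x = S) w) = m \<and> is_identity w}"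

definition qhat :: "nat \<Rightarrow> nat \<Rightarrow> nat" where
  "qhat n m = card {w :: letter list. length (filter (\<lambda>x. x = U) w) = n
                   \<and> length (filter (\<lambda>x. x = S) w) = m \<and> is_identity w
                   \<and> \<not> sublist [S, S] w}"

definition Qgf :: "real fps fps" where
  "Qgf = Abs_fps (\<lambda>n. Abs_fps (\<lambda>m. of_nat (q n m)))"

definition Qhat_gf :: "real fps fps" where
  "Qhat_gf = Abs_fps (\<lambda>j. if 3 dvd j
       then Abs_fps (\<lambda>l. if even l then of_nat (qhat j l) else 0) else 0)"

end

theory Submission
  imports Defs
begin

unbundle fps_syntax



lemma word_mat_Nil[simp]: "word_mat [] = mat2_id" by (simp add: word_mat_def)
lemma word_mat_Cons[simp]: "word_mat (x # w) = mat2_mult (letter_mat x) (word_mat w)"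
  by (simp add: word_mat_def)

fun neg :: "mat2 \<Rightarrow> mat2" where "neg (a,b,c,d) = (-a,-b,-c,-d)"

definition sim :: "mat2 \<Rightarrow> mat2 \<Rightarrow> bool" where "sim A B \<longleftrightarrow> A = B \<or> A = neg B"

lemma neg_neg[simp]: "neg (neg A) = A" by (cases A) auto

lemma mult_neg: "mat2_mult L (neg B) = neg (mat2_mult L B)"
  by (cases L; cases B) (auto simp: algebra_simps)

lemma sim_sym: "sim A B \<Longrightarrow> sim B A" unfolding sim_def by auto
lemma sim_trans: "sim A B \<Longrightarrow> sim B C \<Longrightarrow> sim A C" unfolding sim_def by auto
lemma sim_refl: "sim A A" unfolding sim_def by auto
lemma sim_neg: "sim A B \<Longrightarrow> sim (neg A) B" unfolding sim_def by auto

lemma mult_sim: "sim A B \<Longrightarrow> sim (mat2_mult L A) (mat2_mult L B)"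
  unfolding sim_def by (auto simp: mult_neg)

lemma SS: "mat2_mult (0,-1,1,0) (mat2_mult (0,-1,1,0) X) = neg X"
  by (cases X) auto

lemma is_identity_sim: "is_identity w \<longleftrightarrow> sim (word_mat w) mat2_id"
  unfolding is_identity_def sim_def mat2_id_def by auto

lemma rep_sim: "sim (word_mat w) (word_mat w') \<Longrightarrow>
   sim (word_mat (replicate r S @ w)) (word_mat (replicate (r mod 2) S @ w'))"
proof (induction r rule: less_induct)
  case (less r)
  show ?case
  proof (cases "r < 2")
    case True
    then have "r = 0 \<or> r = 1" by auto
    then show ?thesis using less.prems by (auto intro: mult_sim)
  next
    case False
    then obtain r' where r: "r = Suc (Suc r')" by (metis add_2_eq_Suc le_add_diff_inverse not_less)
    have "sim (word_mat (replicate r' S @ w)) (word_mat (replicate (r' mod 2) S @ w'))"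
      using less r by auto
    then show ?thesis using r by (simp add: SS sim_neg)
  qed
qed

fun g :: "nat list \<Rightarrow> letter list" where
  "g [] = []"
| "g [r] = replicate r S"
| "g (r # s # rs) = replicate r S @ U # g (s # rs)"

fun gaps :: "letter list \<Rightarrow> nat list" where
  "gaps [] = [0]"
| "gaps (U # w) = 0 # gaps w"
| "gaps (S # w) = (case gaps w of [] \<Rightarrow> [] | x # xs \<Rightarrow> Suc x # xs)"

lemma gaps_ne: "gaps w \<noteq> []"
  by (induction w rule: gaps.induct) (auto split: list.split)

lemma gaps_S: "gaps w = x # xs \<Longrightarrow> gaps (S # w) = Suc x # xs" by simp

lemma g_Suc: "g (Suc x # xs) = S # g (x # xs)"
  by (cases xs) auto

lemma g_gaps: "g (gaps w) = w"
proof (induction w rule: gaps.induct)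
  case 1 then show ?case by simp
next
  case (2 w)
  then show ?case using gaps_ne[of w] by (cases "gaps w") auto
next
  case (3 w)
  then show ?case using gaps_ne[of w] by (cases "gaps w") (auto simp: g_Suc)
qed

lemma gaps_rep: "gaps w = x # xs \<Longrightarrow> gaps (replicate r S @ w) = (r + x) # xs"
  by (induction r) auto

lemma gaps_g: "r \<noteq> [] \<Longrightarrow> gaps (g r) = r"
proof (induction r rule: g.induct)
  case (2 r)
  then show ?case using gaps_rep[of "[]" 0 "[]" r] by simp
next
  case (3 r s rs)
  then show ?case using gaps_rep[of "U # g (s # rs)" 0 "s # rs" r] by simp
qed simp

lemma gaps_len: "length (gaps w) = Suc (length (filter (\<lambda>x. x = U) w))"
proof (induction w rule: gaps.induct)
  case (3 w) then show ?case using gaps_ne[of w] by (cases "gaps w") auto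
qed auto

lemma gaps_sum: "sum_list (gaps w) = length (filter (\<lambda>x. x = S) w)"
proof (induction w rule: gaps.induct)
  case (3 w) then show ?case using gaps_ne[of w] by (cases "gaps w") auto
qed auto

lemma gaps_hd: "gaps w = x # xs \<Longrightarrow> (0 < x \<longleftrightarrow> (\<exists>v. w = S # v))"
  by (cases w rule: gaps.cases) (auto split: list.splits)

lemma gaps_sublist: "\<not> sublist [S, S] w \<longleftrightarrow> (\<forall>x\<in>set (gaps w). x \<le> 1)"
proof (induction w rule: gaps.induct)
  case 1 then show ?case by simp
next
  case (2 w) then show ?case by (simp add: sublist_Cons_right)
next
  case (3 w)
  obtain x xs where gx: "gaps w = x # xs" using gaps_ne[of w] by (cases "gaps w") auto
  have "prefix [S,S] (S # w) \<longleftrightarrow> (\<exists>v. w = S # v)" by (auto simp: prefix_def)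
  then show ?case using 3 gx gaps_hd[OF gx] by (auto simp: sublist_Cons_right)
qed

lemma g_sim: "r \<noteq> [] \<Longrightarrow> sim (word_mat (g r)) (word_mat (g (map (\<lambda>x. x mod 2) r)))"
proof (induction r rule: g.induct)
  case (2 r)
  then show ?case using rep_sim[of "[]" "[]" r] by (simp add: sim_refl)
next
  case (3 r s rs)
  have "sim (word_mat (U # g (s # rs))) (word_mat (U # g (map (\<lambda>x. x mod 2) (s # rs))))"
    using 3 by (simp add: mult_sim)
  from rep_sim[OF this, of r] show ?case by simp
qed simp

lemma g_ident: "r \<noteq> [] \<Longrightarrow> is_identity (g r) \<longleftrightarrow> is_identity (g (map (\<lambda>x. x mod 2) r))"
  unfolding is_identity_sim using g_sim sim_sym sim_trans by blast



fun red :: "int \<Rightarrow> mat2 \<Rightarrow> mat2" where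
  "red p (a,b,c,d) = (a mod p, b mod p, c mod p, d mod p)"

definition K3 :: "nat \<Rightarrow> mat2 set" where
  "K3 i = (if i mod 3 = 0 then {(0, 1, 2, 0), (0, 2, 1, 0), (1, 0, 0, 1), (1, 1, 1, 2), (1, 2, 2, 2), (2, 0, 0, 2), (2, 1, 1, 1), (2, 2, 2, 1)}
    else if i mod 3 = 1 then {(0, 1, 2, 2), (0, 2, 1, 1), (1, 0, 2, 1), (1, 1, 0, 1), (1, 2, 1, 0), (2, 0, 1, 2), (2, 1, 2, 0), (2, 2, 0, 2)}
    else {(0, 1, 2, 1), (0, 2, 1, 2), (1, 0, 1, 1), (1, 1, 2, 0), (1, 2, 0, 1), (2, 0, 2, 2), (2, 1, 0, 2), (2, 2, 1, 0)})"

definition K2 :: "nat \<Rightarrow> mat2 set" where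
  "K2 i = (if even i then {(1,0,0,1),(0,1,1,1),(1,1,1,0)} else {(0,1,1,0),(1,1,0,1),(1,0,1,1)})"

lemma red_U: "red p (mat2_mult (letter_mat U) (a,b,c,d)) =
   ((- (c mod p)) mod p, (- (d mod p)) mod p, (a mod p + c mod p) mod p, (b mod p + d mod p) mod p)"
  by (simp add: mod_add_eq mod_minus_eq)

lemma red_S: "red p (mat2_mult (letter_mat S) (a,b,c,d)) =
   ((- (c mod p)) mod p, (- (d mod p)) mod p, a mod p, b mod p)"
  by (simp add: mod_minus_eq)


lemma two_ne: "((2::nat) = 0) = False" "((2::nat) = 1) = False" by simp_all

lemma stepU3: assumes "(a,b,c,d) \<in> K3 n"
  shows "((- c) mod 3, (- d) mod 3, (a + c) mod 3, (b + d) mod 3) \<in> K3 (Suc n)"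
proof -
  consider "n mod 3 = 0" | "n mod 3 = 1" | "n mod 3 = 2" by linarith
  then show ?thesis
  proof cases
    case 1 then have "Suc n mod 3 = 1" by presburger
    with 1 assms show ?thesis unfolding K3_def by (simp only: if_True if_False refl zero_neq_one one_neq_zero two_ne) (elim insertE emptyE; simp)
  next
    case 2 then have "Suc n mod 3 = 2" by presburger
    with 2 assms show ?thesis unfolding K3_def by (simp only: if_True if_False refl zero_neq_one one_neq_zero two_ne) (elim insertE emptyE; simp)
  next
    case 3 then have "Suc n mod 3 = 0" by presburger
    with 3 assms show ?thesis unfolding K3_def by (simp only: if_True if_False refl zero_neq_one one_neq_zero two_ne) (elim insertE emptyE; simp)
  qed
qed
lemma stepS3: assumes "(a,b,c,d) \<in> K3 n"
  shows "((- c) mod 3, (- d) mod 3, a, b) \<in> K3 n"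
proof -
  consider "n mod 3 = 0" | "n mod 3 = 1" | "n mod 3 = 2" by linarith
  then show ?thesis
  proof cases
    case 1
    with assms show ?thesis unfolding K3_def by (simp only: if_True if_False refl zero_neq_one one_neq_zero two_ne) (elim insertE emptyE; simp)
  next
    case 2
    with assms show ?thesis unfolding K3_def by (simp only: if_True if_False refl zero_neq_one one_neq_zero two_ne) (elim insertE emptyE; simp)
  next
    case 3
    with assms show ?thesis unfolding K3_def by (simp only: if_True if_False refl zero_neq_one one_neq_zero two_ne) (elim insertE emptyE; simp)
  qed
qed

lemma stepU2: assumes "(a,b,c,d) \<in> K2 n"
  shows "((- c) mod 2, (- d) mod 2, (a + c) mod 2, (b + d) mod 2) \<in> K2 n"
proof (cases "even n")
  case True with assms show ?thesis unfolding K2_def by (simp only: if_True if_False) (elim insertE emptyE; simp)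
next
  case False with assms show ?thesis unfolding K2_def by (simp only: if_True if_False) (elim insertE emptyE; simp)
qed

lemma stepS2: assumes "(a,b,c,d) \<in> K2 n"
  shows "((- c) mod 2, (- d) mod 2, a, b) \<in> K2 (Suc n)"
proof (cases "even n")
  case True 
  then have "\<not> even (Suc n)" by simp
  with True assms show ?thesis unfolding K2_def by (simp only: if_True if_False) (elim insertE emptyE; simp)
next
  case False 
  then have "even (Suc n)" by simp
  with False assms show ?thesis unfolding K2_def by (simp only: if_True if_False) (elim insertE emptyE; simp)
qed

lemma inv3: "red 3 (word_mat w) \<in> K3 (length (filter (\<lambda>x. x = U) w))"
proof (induction w)
  case Nil then show ?case by (simp add: K3_def mat2_id_def)
next
  case (Cons x w)
  obtain a b c d where M: "word_mat w = (a,b,c,d)" by (cases "word_mat w") auto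
  define n where "n = length (filter (\<lambda>x. x = U) w)"
  have H: "(a mod 3, b mod 3, c mod 3, d mod 3) \<in> K3 n" using Cons M n_def by (simp only: red.simps)
  show ?case
  proof (cases x)
    case U
    have e: "red 3 (word_mat (U # w)) = ((- (c mod 3)) mod 3, (- (d mod 3)) mod 3, (a mod 3 + c mod 3) mod 3, (b mod 3 + d mod 3) mod 3)"
      by (simp only: word_mat_Cons M red_U)
    have l: "length (filter (\<lambda>x. x = U) (U # w)) = Suc n" by (simp add: n_def)
    show ?thesis unfolding U e l by (rule stepU3[OF H])
  next
    case S
    have e: "red 3 (word_mat (S # w)) = ((- (c mod 3)) mod 3, (- (d mod 3)) mod 3, a mod 3, b mod 3)"
      by (simp only: word_mat_Cons M red_S)
    have l: "length (filter (\<lambda>x. x = U) (S # w)) = n" by (simp add: n_def)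
    show ?thesis unfolding S e l by (rule stepS3[OF H])
  qed
qed

lemma inv2: "red 2 (word_mat w) \<in> K2 (length (filter (\<lambda>x. x = S) w))"
proof (induction w)
  case Nil then show ?case by (simp add: K2_def mat2_id_def)
next
  case (Cons x w)
  obtain a b c d where M: "word_mat w = (a,b,c,d)" by (cases "word_mat w") auto
  define n where "n = length (filter (\<lambda>x. x = S) w)"
  have H: "(a mod 2, b mod 2, c mod 2, d mod 2) \<in> K2 n" using Cons M n_def by (simp only: red.simps)
  show ?case
  proof (cases x)
    case U
    have e: "red 2 (word_mat (U # w)) = ((- (c mod 2)) mod 2, (- (d mod 2)) mod 2, (a mod 2 + c mod 2) mod 2, (b mod 2 + d mod 2) mod 2)"
      by (simp only: word_mat_Cons M red_U)
    have l: "length (filter (\<lambda>x. x = S) (U # w)) = n" by (simp add: n_def)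
    show ?thesis unfolding U e l by (rule stepU2[OF H])
  next
    case S
    have e: "red 2 (word_mat (S # w)) = ((- (c mod 2)) mod 2, (- (d mod 2)) mod 2, a mod 2, b mod 2)"
      by (simp only: word_mat_Cons M red_S)
    have l: "length (filter (\<lambda>x. x = S) (S # w)) = Suc n" by (simp add: n_def)
    show ?thesis unfolding S e l by (rule stepS2[OF H])
  qed
qed

lemma ident_inv: assumes "is_identity w"
  shows "3 dvd length (filter (\<lambda>x. x = U) w) \<and> even (length (filter (\<lambda>x. x = S) w))"
proof -
  have A: "red 3 (word_mat w) = (1,0,0,1) \<or> red 3 (word_mat w) = (2,0,0,2)"
          "red 2 (word_mat w) = (1,0,0,1)"
    using assms unfolding is_identity_def by auto
  have 3: "3 dvd length (filter (\<lambda>x. x = U) w)"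
  proof (rule ccontr)
    assume "\<not> ?thesis"
    then have "length (filter (\<lambda>x. x = U) w) mod 3 = 1 \<or> length (filter (\<lambda>x. x = U) w) mod 3 = 2" by presburger
    then show False using inv3[of w] A(1) unfolding K3_def by auto
  qed
  have 2: "even (length (filter (\<lambda>x. x = S) w))"
    using inv2[of w] A(2) unfolding K2_def by (auto split: if_splits)
  show ?thesis using 2 3 by simp
qed



lemma g_counts: "r \<noteq> [] \<Longrightarrow> length (filter (\<lambda>x. x = U) (g r)) = length r - 1 \<and> length (filter (\<lambda>x. x = S) (g r)) = sum_list r"
  using gaps_len[of "g r"] gaps_sum[of "g r"] gaps_g[of r] by simp

lemma g_countU: "length r = Suc N \<Longrightarrow> length (filter (\<lambda>x. x = U) (g r)) = N"
  using g_counts[of r] by (cases r) auto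
lemma g_countS: "length r = Suc N \<Longrightarrow> length (filter (\<lambda>x. x = S) (g r)) = sum_list r"
  using g_counts[of r] by (cases r) auto

lemma q_gaps: "q N M = card {r. length r = Suc N \<and> sum_list r = M \<and> is_identity (g r)}"
  unfolding q_def
proof (rule bij_betw_same_card[of gaps], rule bij_betw_byWitness[where f'=g])
  show "\<forall>a\<in>{w. length (filter (\<lambda>x. x = U) w) = N \<and> length (filter (\<lambda>x. x = S) w) = M \<and> is_identity w}. g (gaps a) = a"
    by (simp add: g_gaps)
  show "\<forall>a'\<in>{r. length r = Suc N \<and> sum_list r = M \<and> is_identity (g r)}. gaps (g a') = a'"
    by (auto intro!: gaps_g)
  show "gaps ` {w. length (filter (\<lambda>x. x = U) w) = N \<and> length (filter (\<lambda>x. x = S) w) = M \<and> is_identity w}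
    \<subseteq> {r. length r = Suc N \<and> sum_list r = M \<and> is_identity (g r)}"
    by (auto simp: gaps_len gaps_sum g_gaps)
  show "g ` {r. length r = Suc N \<and> sum_list r = M \<and> is_identity (g r)}
    \<subseteq> {w. length (filter (\<lambda>x. x = U) w) = N \<and> length (filter (\<lambda>x. x = S) w) = M \<and> is_identity w}"
    by (auto simp: g_countU g_countS)
qed

lemma g_sub: "length r = Suc N \<Longrightarrow> (\<not> sublist [S, S] (g r)) \<longleftrightarrow> (\<forall>x\<in>set r. x \<le> 1)"
  using gaps_sublist[of "g r"] gaps_g[of r] by (cases r) auto

lemma g_sub2: "length r = Suc N \<Longrightarrow> sublist [S, S] (g r) \<Longrightarrow> \<exists>x\<in>set r. x > 1"
  using g_sub[of r N] by (force simp: not_le)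

lemma qhat_gaps: "qhat N M = card {r. length r = Suc N \<and> sum_list r = M \<and> (\<forall>x\<in>set r. x \<le> 1) \<and> is_identity (g r)}"
  unfolding qhat_def
proof (rule bij_betw_same_card[of gaps], rule bij_betw_byWitness[where f'=g])
  show "\<forall>a\<in>{w. length (filter (\<lambda>x. x = U) w) = N \<and> length (filter (\<lambda>x. x = S) w) = M \<and> is_identity w \<and> \<not> sublist [S, S] w}. g (gaps a) = a"
    by (simp add: g_gaps)
  show "\<forall>a'\<in>{r. length r = Suc N \<and> sum_list r = M \<and> (\<forall>x\<in>set r. x \<le> 1) \<and> is_identity (g r)}. gaps (g a') = a'"
    by (auto intro!: gaps_g)
  show "gaps ` {w. length (filter (\<lambda>x. x = U) w) = N \<and> length (filter (\<lambda>x. x = S) w) = M \<and> is_identity w \<and> \<not> sublist [S, S] w}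
    \<subseteq> {r. length r = Suc N \<and> sum_list r = M \<and> (\<forall>x\<in>set r. x \<le> 1) \<and> is_identity (g r)}"
    using gaps_sublist by (auto simp: gaps_len gaps_sum g_gaps)
  show "g ` {r. length r = Suc N \<and> sum_list r = M \<and> (\<forall>x\<in>set r. x \<le> 1) \<and> is_identity (g r)}
    \<subseteq> {w. length (filter (\<lambda>x. x = U) w) = N \<and> length (filter (\<lambda>x. x = S) w) = M \<and> is_identity w \<and> \<not> sublist [S, S] w}"
  proof (rule image_subsetI)
    fix r assume "r \<in> {r. length r = Suc N \<and> sum_list r = M \<and> (\<forall>x\<in>set r. x \<le> 1) \<and> is_identity (g r)}"
    then have l: "length r = Suc N" "sum_list r = M" "\<forall>x\<in>set r. x \<le> 1" "is_identity (g r)" by auto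
    then have "\<not> sublist [S, S] (g r)" using g_sub by blast
    then show "g r \<in> {w. length (filter (\<lambda>x. x = U) w) = N \<and> length (filter (\<lambda>x. x = S) w) = M \<and> is_identity w \<and> \<not> sublist [S, S] w}"
      using l by (simp add: g_countU g_countS)
  qed
qed

lemma mod_map2: "length (e::nat list) = length t \<Longrightarrow> \<forall>x\<in>set e. x \<le> 1 \<Longrightarrow>
   map (\<lambda>x. x mod 2) (map2 (\<lambda>a b. a + 2 * b) e t) = e"
  by (induction e t rule: list_induct2) auto

lemma div_map2: "length (e::nat list) = length t \<Longrightarrow> \<forall>x\<in>set e. x \<le> 1 \<Longrightarrow>
   map (\<lambda>x. x div 2) (map2 (\<lambda>a b. a + 2 * b) e t) = t"
  by (induction e t rule: list_induct2) auto

lemma sum_map2: "length (e::nat list) = length t \<Longrightarrow>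
   sum_list (map2 (\<lambda>a b. a + 2 * b) e t) = sum_list e + 2 * sum_list t"
  by (induction e t rule: list_induct2) auto

lemma map2_moddiv: "map2 (\<lambda>a b. a + 2 * b) (map (\<lambda>x. x mod 2) (r::nat list)) (map (\<lambda>x. x div 2) r) = r"
  by (induction r) auto

lemma sum_moddiv: "sum_list (map (\<lambda>x. x mod 2) (r::nat list)) + 2 * sum_list (map (\<lambda>x. x div 2) r) = sum_list r"
  by (induction r) auto

lemma finite_bounded_lists: "finite {r :: nat list. length r = n \<and> sum_list r = M}"
proof (rule finite_subset[OF _ finite_lists_length_eq[of "{0..M}" n]])
  show "{r. length r = n \<and> sum_list r = M} \<subseteq> {xs. set xs \<subseteq> {0..M} \<and> length xs = n}"
    using member_le_sum_list by fastforce
qed simp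

lemma count_main: "q N M = (\<Sum>s=0..M. qhat N s * (if even (M - s) then (N + (M - s) div 2) choose ((M - s) div 2) else 0))"
proof -
  define Q where "Q e = is_identity (g e)" for e
  define R where "R = {r. length r = Suc N \<and> sum_list r = M \<and> is_identity (g r)}"
  define E where "E = {e. length e = Suc N \<and> (\<forall>x\<in>set e. x \<le> 1) \<and> Q e \<and> sum_list e \<le> M}"
  define T where "T e = {t. length t = Suc N \<and> sum_list e + 2 * sum_list t = M}" for e :: "nat list"
  define F where "F s = (if even (M - s) then (N + (M - s) div 2) choose ((M - s) div 2) else 0)" for s
  have R: "R = {r. length r = Suc N \<and> sum_list r = M \<and> Q (map (\<lambda>x. x mod 2) r)}"
    unfolding R_def Q_def using g_ident by (auto; metis Zero_not_Suc list.size(3))+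
  have bij: "bij_betw (\<lambda>r. (map (\<lambda>x. x mod 2) r, map (\<lambda>x. x div 2) r)) R (Sigma E T)"
  proof (rule bij_betw_byWitness[where f'="\<lambda>(e,t). map2 (\<lambda>a b. a + 2 * b) e t"])
    show "\<forall>a\<in>R. (case (map (\<lambda>x. x mod 2) a, map (\<lambda>x. x div 2) a) of (e, t) \<Rightarrow> map2 (\<lambda>a b. a + 2 * b) e t) = a"
      by (simp add: map2_moddiv)
    show "\<forall>a'\<in>Sigma E T. (\<lambda>r. (map (\<lambda>x. x mod 2) r, map (\<lambda>x. x div 2) r)) (case a' of (e, t) \<Rightarrow> map2 (\<lambda>a b. a + 2 * b) e t) = a'"
      by (auto simp: E_def T_def mod_map2[simplified] div_map2[simplified])
    show "(\<lambda>r. (map (\<lambda>x. x mod 2) r, map (\<lambda>x. x div 2) r)) ` R \<subseteq> Sigma E T"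
    proof (rule image_subsetI)
      fix r assume "r \<in> R"
      then have "length r = Suc N" "sum_list r = M" "Q (map (\<lambda>x. x mod 2) r)" unfolding R by auto
      moreover have "sum_list (map (\<lambda>x. x mod 2) r) + 2 * sum_list (map (\<lambda>x. x div 2) r) = sum_list r" by (rule sum_moddiv)
      ultimately show "(map (\<lambda>x. x mod 2) r, map (\<lambda>x. x div 2) r) \<in> Sigma E T" unfolding E_def T_def by auto
    qed
    show "(\<lambda>(e, t). map2 (\<lambda>a b. a + 2 * b) e t) ` Sigma E T \<subseteq> R"
      unfolding R E_def T_def by (auto simp: mod_map2[simplified] sum_map2)
  qed
  have finE: "finite E"
    by (rule finite_subset[OF _ finite_lists_length_eq[of "{0..1}" "Suc N"]]) (auto simp: E_def)
  have finT: "finite (T e)" for e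
    by (rule finite_subset[OF _ finite_bounded_lists[of "Suc N" "(M - sum_list e) div 2"]])
       (auto simp: T_def)
  have cT: "card (T e) = F (sum_list e)" if "e \<in> E" for e
  proof (cases "even (M - sum_list e)")
    case True
    have le: "sum_list e \<le> M" using that by (simp add: E_def)
    have "T e = {t. length t = Suc N \<and> sum_list t = (M - sum_list e) div 2}"
      unfolding T_def using True le by auto
    then show ?thesis using True card_length_sum_list[of "Suc N" "(M - sum_list e) div 2"]
      by (simp add: F_def add.commute)
  next
    case False
    then have "T e = {}" unfolding T_def by auto
    then show ?thesis using False by (simp add: F_def)
  qed
  have "q N M = card R" by (simp add: q_gaps R_def)
  also have "\<dots> = card (Sigma E T)" by (rule bij_betw_same_card[OF bij])
  also have "\<dots> = (\<Sum>e\<in>E. card (T e))" using finE finT by simp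
  also have "\<dots> = (\<Sum>e\<in>E. F (sum_list e))" using cT by simp
  also have "\<dots> = (\<Sum>s=0..M. \<Sum>e\<in>{e\<in>E. sum_list e = s}. F (sum_list e))"
    by (rule sum.group[symmetric]) (use finE in \<open>auto simp: E_def\<close>)
  also have "\<dots> = (\<Sum>s=0..M. qhat N s * F s)"
  proof (rule sum.cong[OF refl])
    fix s assume s: "s \<in> {0..M}"
    have "{e\<in>E. sum_list e = s} = {r. length r = Suc N \<and> sum_list r = s \<and> (\<forall>x\<in>set r. x \<le> 1) \<and> is_identity (g r)}"
      using s by (auto simp: E_def Q_def)
    then show "(\<Sum>e\<in>{e\<in>E. sum_list e = s}. F (sum_list e)) = qhat N s * F s"
      by (simp add: qhat_gaps)
  qed
  finally show ?thesis by (simp add: F_def)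
qed




lemma qhat_zero: assumes "\<not> (3 dvd n \<and> even l)" shows "qhat n l = 0"
proof -
  have "{w :: letter list. length (filter (\<lambda>x. x = U) w) = n
                   \<and> length (filter (\<lambda>x. x = S) w) = l \<and> is_identity w
                   \<and> \<not> sublist [S, S] w} = {}"
    using ident_inv assms by blast
  then show ?thesis unfolding qhat_def by (metis card.empty)
qed

definition Tp :: "nat \<Rightarrow> real fps" where
  "Tp n = Abs_fps (\<lambda>j. if even j then of_nat ((n + j div 2) choose (j div 2)) else 0)"

lemma mult_1mX2_nth: "(f * (1 - fps_X ^ 2 :: real fps)) $ j = f $ j - (if j < 2 then 0 else f $ (j - 2))"
  by (simp add: algebra_simps fps_X_power_mult_right_nth)

lemma Tp0: "Tp 0 * (1 - fps_X ^ 2) = 1"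
proof (rule fps_ext)
  fix j
  show "(Tp 0 * (1 - fps_X ^ 2)) $ j = (1 :: real fps) $ j"
  proof (cases "j < 2")
    case True then have "j = 0 \<or> j = 1" by auto
    then show ?thesis by (auto simp: mult_1mX2_nth Tp_def)
  next
    case False
    then show ?thesis by (auto simp: mult_1mX2_nth Tp_def)
  qed
qed

lemma TpSuc: "Tp (Suc n) * (1 - fps_X ^ 2) = Tp n"
proof (rule fps_ext)
  fix j
  show "(Tp (Suc n) * (1 - fps_X ^ 2)) $ j = Tp n $ j"
  proof (cases "j < 2")
    case True then have "j = 0 \<or> j = 1" by auto
    then show ?thesis by (auto simp: mult_1mX2_nth Tp_def)
  next
    case False
    show ?thesis
    proof (cases "even j")
      case True
      then obtain k where k: "j = 2 * Suc k" using False
        by (metis evenE less_2_cases_iff not_less_eq Suc_1 mult_0_right nat.exhaust)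
      have jj: "j - 2 = 2 * k" using k by simp
      have "Suc n + Suc k choose Suc k = (n + Suc k choose k) + (n + Suc k choose Suc k)"
        by simp
      then show ?thesis using k False jj by (simp add: mult_1mX2_nth Tp_def)
    next
      case odd: False
      then show ?thesis using False by (simp add: mult_1mX2_nth Tp_def)
    qed
  qed
qed

lemma Cpow: "inverse (1 - fps_X ^ 2 :: real fps) ^ Suc n = Tp n"
proof -
  define C where "C = inverse (1 - fps_X ^ 2 :: real fps)"
  have C1: "(1 - fps_X ^ 2) * C = 1" unfolding C_def by (rule inverse_mult_eq_1') simp
  have T0: "Tp 0 = C" using Tp0 C1 by (metis mult.assoc mult_1 mult_1_right)
  have TS: "Tp (Suc m) = Tp m * C" for m
    by (metis C1 TpSuc mult.assoc mult_1_right)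
  show ?thesis unfolding C_def[symmetric]
    by (induction n) (simp_all add: T0 TS mult.commute)
qed




lemma part1: "q N (2*m) = (\<Sum>k\<le>m. qhat N (2*m - 2*k) * ((N + k) choose k))"
proof -
  define h where "h s = qhat N s * (if even (2*m - s) then (N + (2*m - s) div 2) choose ((2*m - s) div 2) else 0)" for s
  have "(\<Sum>k\<le>m. qhat N (2*m - 2*k) * ((N + k) choose k)) = (\<Sum>k\<le>m. h (2*m - 2*k))"
  proof (rule sum.cong[OF refl])
    fix k assume "k \<in> {..m}"
    then have "2*m - (2*m - 2*k) = 2*k" by auto
    then show "qhat N (2*m - 2*k) * ((N + k) choose k) = h (2*m - 2*k)" by (simp add: h_def)
  qed
  also have "\<dots> = sum h ((\<lambda>k. 2*m - 2*k) ` {..m})"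
    by (rule sum.reindex[symmetric, unfolded comp_def]) (auto simp: inj_on_def)
  also have "\<dots> = sum h {0..2*m}"
  proof (rule sum.mono_neutral_left)
    show "(\<lambda>k. 2*m - 2*k) ` {..m} \<subseteq> {0..2*m}" by auto
    show "\<forall>i\<in>{0..2*m} - (\<lambda>k. 2*m - 2*k) ` {..m}. h i = 0"
    proof
      fix i assume i: "i \<in> {0..2*m} - (\<lambda>k. 2*m - 2*k) ` {..m}"
      have "odd (2*m - i)"
      proof
        assume "even (2*m - i)"
        then obtain k where "2*m - i = 2*k" by blast
        then have "i = 2*m - 2*k" "k \<le> m" using i by auto
        then show False using i by auto
      qed
      then show "h i = 0" by (simp add: h_def)
    qed
  qed simp
  finally show ?thesis by (simp add: count_main h_def)
qed

lemma Qhat_nth: "Qhat_gf $ n = Abs_fps (\<lambda>l. of_nat (qhat n l))"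
  unfolding Qhat_gf_def by (rule fps_ext) (auto simp: qhat_zero)

lemma part2: "Qgf = fps_compose Qhat_gf (fps_const (inverse (1 - fps_X ^ 2)) * fps_X)
             * fps_const (inverse (1 - fps_X ^ 2))"
proof (rule fps_ext)
  fix n
  define C where "C = inverse (1 - fps_X ^ 2 :: real fps)"
  have "(fps_compose Qhat_gf (fps_const C * fps_X) * fps_const C) $ n = C ^ n * Qhat_gf $ n * C"
    by (simp add: fps_compose_linear)
  also have "\<dots> = Abs_fps (\<lambda>l. of_nat (qhat n l)) * Tp n"
    unfolding Qhat_nth Cpow[symmetric] C_def by (simp add: algebra_simps)
  also have "\<dots> = Qgf $ n"
  proof (rule fps_ext)
    fix M
    have "(Abs_fps (\<lambda>l. of_nat (qhat n l)) * Tp n) $ M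
        = (\<Sum>i=0..M. of_nat (qhat n i) * (if even (M - i) then of_nat ((n + (M - i) div 2) choose ((M - i) div 2)) else 0))"
      by (simp add: fps_mult_nth Tp_def)
    also have "\<dots> = (of_nat (q n M) :: real)"
      unfolding count_main of_nat_sum by (rule sum.cong) auto
    finally show "(Abs_fps (\<lambda>l. of_nat (qhat n l)) * Tp n) $ M = Qgf $ n $ M"
      by (simp add: Qgf_def)
  qed
  finally show "Qgf $ n = (fps_compose Qhat_gf (fps_const (inverse (1 - fps_X ^ 2)) * fps_X)
             * fps_const (inverse (1 - fps_X ^ 2))) $ n" by (simp add: C_def)
qed

theorem proposition2:
  shows "(\<forall>n m :: nat. q (3*n) (2*m) = (\<Sum>k\<le>m. qhat (3*n) (2*m - 2*k) * ((3*n + k) choose k)))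
    \<and> Qgf = fps_compose Qhat_gf (fps_const (inverse (1 - fps_X ^ 2)) * fps_X)
             * fps_const (inverse (1 - fps_X ^ 2))"
  using part1 part2 by blast


end
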